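(* Let $G$ be a compact abelian group and let $G^0$ denote the connected component of the identity in $G$. If $G/G^0$ is infinite, then $\lambda(G)=0$.
   Context: For a compact abelian group $G$ with normalized Haar measure $\mu$ and (multiplicative) dual group of characters $\widehat{G}$, let $\mathbb{Z}[\widehat{G}]$ denote the ring of integral linear combinations of characters, regarded as functions on $G$. For $f\in\mathbb{Z}[\widehat{G}]$, the logarithmic Mahler measure over $G$ is $\mathsf{m}_G(f)=\int_G\log|f|\,d\mu$ (with $\log 0=-\infty$, so this may equal $-\infty$). The Lehmer constant of $G$ is $\lambda(G)=\inf\{\mathsf{m}_G(f): f\in\mathbb{Z}[\widehat{G}],\ \mathsf{m}_G(f)>0\}$. *)

theory Defs
  imports "HOL-Analysis.Analysis" "HOL-Probability.Probability"
begin

text \<open>A compact abelian group is modelled as a type of class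
  topological_ab_group_add + t2_space whose universe is compact
  (group operation written additively).\<close>

definition haar_prob :: "'a::topological_ab_group_add measure \<Rightarrow> bool" where
  "haar_prob M \<longleftrightarrow> prob_space M \<and> sets M = sets borel \<and>
     (\<forall>g. \<forall>A\<in>sets borel. measure M ((\<lambda>x. g + x) ` A) = measure M A)"

definition character :: "('a::topological_ab_group_add \<Rightarrow> complex) \<Rightarrow> bool" where
  "character ch \<longleftrightarrow> continuous_on UNIV ch \<and>
     (\<forall>x y. ch (x + y) = ch x * ch y) \<and> (\<forall>x. norm (ch x) = 1)"

text \<open>The ring Z[dual G] of integral linear combinations of characters, as functions on G.\<close>
definition int_char_poly :: "('a::topological_ab_group_add \<Rightarrow> complex) set" where
  "int_char_poly = {f. \<exists>S (c :: ('a \<Rightarrow> complex) \<Rightarrow> int). finite S \<and>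
       (\<forall>ch\<in>S. character ch) \<and> f = (\<lambda>x. \<Sum>ch\<in>S. of_int (c ch) * ch x)}"

text \<open>Logarithmic Mahler measure m_G(f) = integral of log|f| with log 0 = -infinity.
  Since |f| is bounded, log|f| is bounded above; hence the integral is
  -infinity exactly when f vanishes on a set of positive measure or log|f|
  is not integrable.\<close>
definition mahler :: "'a measure \<Rightarrow> ('a \<Rightarrow> complex) \<Rightarrow> ereal" where
  "mahler M f = (if (AE x in M. f x \<noteq> 0) \<and> integrable M (\<lambda>x. ln (norm (f x)))
                 then ereal (integral\<^sup>L M (\<lambda>x. ln (norm (f x)))) else -\<infinity>)"

definition lehmer_const :: "'a::topological_ab_group_add measure \<Rightarrow> ereal" where
  "lehmer_const M = Inf {mahler M f | f. f \<in> int_char_poly \<and> mahler M f > 0}"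

end

theory Submission
  imports Defs
begin

lemma clopen_sep:
  fixes x :: "'a::t2_space"
  assumes "compact (UNIV :: 'a set)" "x \<notin> connected_component_set UNIV y"
  shows "\<exists>T. open T \<and> closed T \<and> y \<in> T \<and> x \<notin> T"
proof -
  have cs: "compact_space (euclidean :: 'a topology)"
    using assms(1) by (simp add: compact_space_def)
  have "quasi_components_of (euclidean :: 'a topology) = connected_components_of euclidean"
  proof (rule quasi_eq_connected_components_of)
    have "Hausdorff_space (euclidean :: 'a topology)"
      unfolding Hausdorff_space_def disjnt_def
    proof (intro allI impI)
      fix x y :: 'a assume "x \<in> topspace euclidean \<and> y \<in> topspace euclidean \<and> x \<noteq> y"
      then have "x \<noteq> y" by simp
      from hausdorff[OF this] obtain U V where "open U" "open V" "x \<in> U" "y \<in> V" "U \<inter> V = {}"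
        by blast
      then show "\<exists>U V. openin euclidean U \<and> openin euclidean V \<and> x \<in> U \<and> y \<in> V \<and> U \<inter> V = {}"
        by auto
    qed
    then show "finite (connected_components_of (euclidean :: 'a topology)) \<or>
      finite (quasi_components_of (euclidean :: 'a topology)) \<or>
      locally_connected_space (euclidean :: 'a topology) \<or>
      compact_space (euclidean :: 'a topology) \<and> (Hausdorff_space (euclidean :: 'a topology) \<or>
        regular_space (euclidean :: 'a topology) \<or> normal_space (euclidean :: 'a topology))"
      using cs by blast
  qed
  then have "\<forall>z::'a. quasi_component_of euclidean z = connected_component_of euclidean z"
    by (simp only: quasi_eq_connected_components_of_pointwise_alt[symmetric])
  then have eq: "quasi_component_of euclidean y = connected_component_of euclidean y"
    by (rule spec)
  have "\<not> connected_component_of euclidean y x"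
  proof
    assume "connected_component_of euclidean y x"
    then obtain T where "connectedin euclidean T" "y \<in> T" "x \<in> T"
      unfolding connected_component_of_def by blast
    then have "connected T" by simp
    then show False using assms(2) \<open>y \<in> T\<close> \<open>x \<in> T\<close>
      using connected_component_maximal[of y T UNIV] by blast
  qed
  then have "\<not> quasi_component_of euclidean y x" using eq by simp
  then show ?thesis by (simp add: quasi_component_of) blast
qed

definition sgrp :: "'a::ab_group_add set \<Rightarrow> bool" where
  "sgrp H \<longleftrightarrow> 0 \<in> H \<and> (\<forall>x\<in>H. \<forall>y\<in>H. x - y \<in> H)"

lemma sgrp_0: "sgrp H \<Longrightarrow> 0 \<in> H" by (simp add: sgrp_def)
lemma sgrp_diff: "sgrp H \<Longrightarrow> x \<in> H \<Longrightarrow> y \<in> H \<Longrightarrow> x - y \<in> H" by (simp add: sgrp_def)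
lemma sgrp_uminus: "sgrp H \<Longrightarrow> x \<in> H \<Longrightarrow> - x \<in> H"
  using sgrp_diff[of H 0 x] sgrp_0[of H] by simp
lemma sgrp_add: "sgrp H \<Longrightarrow> x \<in> H \<Longrightarrow> y \<in> H \<Longrightarrow> x + y \<in> H"
  using sgrp_diff[of H x "- y"] sgrp_uminus[of H y] by simp

lemma open_vimage_cont: "open S \<Longrightarrow> continuous_on UNIV f \<Longrightarrow> open (f -` S)"
  using continuous_on_open_vimage[of UNIV f] by auto

lemma open_subgroup_in_clopen:
  fixes V :: "'a::{topological_ab_group_add,t2_space} set"
  assumes cpt: "compact (UNIV::'a set)" and oV: "open V" and clV: "closed V" and V0: "0 \<in> V"
  shows "\<exists>U. sgrp U \<and> open U \<and> U \<subseteq> V"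
proof -
  have cV: "compact V" using closed_Int_compact[OF clV cpt] by simp
  have cadd: "continuous_on UNIV (\<lambda>p::'a\<times>'a. fst p + snd p)" by (intro continuous_intros)
  have oP: "open ((\<lambda>p::'a\<times>'a. fst p + snd p) -` V)" by (rule open_vimage_cont[OF oV cadd])
  have "\<forall>v\<in>V. \<exists>A B. open A \<and> open B \<and> v \<in> A \<and> 0 \<in> B \<and> (\<forall>a\<in>A. \<forall>b\<in>B. a + b \<in> V)"
  proof
    fix v assume "v \<in> V"
    then have "(v, 0) \<in> (\<lambda>p::'a\<times>'a. fst p + snd p) -` V" by simp
    from open_prod_elim[OF oP this] obtain A B where "open A" "open B" "(v,0) \<in> A \<times> B"
      "A \<times> B \<subseteq> (\<lambda>p::'a\<times>'a. fst p + snd p) -` V" by blast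
    then show "\<exists>A B. open A \<and> open B \<and> v \<in> A \<and> 0 \<in> B \<and> (\<forall>a\<in>A. \<forall>b\<in>B. a + b \<in> V)"
      by (intro exI[of _ A] exI[of _ B]) auto
  qed
  then obtain A B where AB: "\<And>v. v \<in> V \<Longrightarrow> open (A v) \<and> open (B v) \<and> v \<in> A v \<and> 0 \<in> B v \<and>
      (\<forall>a\<in>A v. \<forall>b\<in>B v. a + b \<in> V)"
    by metis
  have "V \<subseteq> (\<Union>v\<in>V. A v)" using AB by blast
  then obtain F where F: "F \<subseteq> V" "finite F" "V \<subseteq> (\<Union>v\<in>F. A v)"
    using compactE_image[OF cV, of V A] AB by blast
  define W0 where "W0 = (\<Inter>v\<in>F. B v)"
  have oW0: "open W0" unfolding W0_def using F AB by (intro open_INT) auto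
  have W00: "0 \<in> W0" unfolding W0_def using F AB by auto
  have VW0: "x + w \<in> V" if xV: "x \<in> V" and wW: "w \<in> W0" for x w
  proof -
    obtain v where "v \<in> F" "x \<in> A v" using F(3) xV by blast
    then show ?thesis using AB[of v] F(1) wW unfolding W0_def by blast
  qed
  define W where "W = W0 \<inter> uminus -` W0"
  have oW: "open W" unfolding W_def
    by (intro open_Int oW0 open_vimage_cont) (auto intro: continuous_intros)
  have VW: "x + w \<in> V" "x + - w \<in> V" if "x \<in> V" "w \<in> W" for x w
    using VW0[of x w] VW0[of x "- w"] that unfolding W_def by auto
  define U where "U = {x. (\<forall>v\<in>V. x + v \<in> V) \<and> (\<forall>v\<in>V. -x + v \<in> V)}"
  have "sgrp U"
    unfolding sgrp_def
  proof (intro conjI ballI)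
    show "0 \<in> U" unfolding U_def by simp
    fix x y assume x: "x \<in> U" and y: "y \<in> U"
    have "x - y + v \<in> V" if "v \<in> V" for v
    proof -
      have "-y + v \<in> V" using y that unfolding U_def by auto
      then have "x + (-y + v) \<in> V" using x unfolding U_def by auto
      then show "x - y + v \<in> V" by (simp add: algebra_simps)
    qed
    moreover have "- (x - y) + v \<in> V" if "v \<in> V" for v
    proof -
      have "y + v \<in> V" using y that unfolding U_def by auto
      then have "-x + (y + v) \<in> V" using x unfolding U_def by auto
      then show "- (x - y) + v \<in> V" by (simp add: algebra_simps)
    qed
    ultimately show "x - y \<in> U" unfolding U_def by blast
  qed
  moreover have "U \<subseteq> V"
  proof
    fix x assume "x \<in> U"
    then have "x + 0 \<in> V" using V0 unfolding U_def by blast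
    then show "x \<in> V" by simp
  qed
  moreover have "open U"
  proof (subst open_subopen, intro ballI)
    fix x assume x: "x \<in> U"
    define T where "T = (\<lambda>y. y - x) -` W"
    have "open T" unfolding T_def by (intro open_vimage_cont[OF oW]) (auto intro: continuous_intros)
    moreover have "x \<in> T" unfolding T_def W_def using W00 by auto
    moreover have "T \<subseteq> U"
    proof
      fix y assume "y \<in> T"
      then have w: "y - x \<in> W" unfolding T_def by simp
      have "y + v \<in> V" if "v \<in> V" for v
      proof -
        have "v + (y - x) \<in> V" using VW(1)[OF that w] .
        then have "x + (v + (y - x)) \<in> V" using x unfolding U_def by blast
        then show ?thesis by (simp add: algebra_simps)
      qed
      moreover have "-y + v \<in> V" if "v \<in> V" for v
      proof -
        have "v + - (y - x) \<in> V" using VW(2)[OF that w] .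
        then have "-x + (v + - (y - x)) \<in> V" using x unfolding U_def by blast
        then show ?thesis by (simp add: algebra_simps)
      qed
      ultimately show "y \<in> U" unfolding U_def by blast
    qed
    ultimately show "\<exists>T. open T \<and> x \<in> T \<and> T \<subseteq> U" by blast
  qed
  ultimately show ?thesis by blast
qed

lemma comp_translate:
  fixes g :: "'a::topological_ab_group_add"
  shows "(\<lambda>x. g + x) ` connected_component_set UNIV 0 = connected_component_set UNIV g"
proof
  have "connected ((\<lambda>x. g + x) ` connected_component_set UNIV 0)"
    by (intro connected_continuous_image connected_connected_component) (auto intro!: continuous_intros)
  moreover have "g \<in> (\<lambda>x. g + x) ` connected_component_set UNIV 0"
    using connected_component_refl[of "0::'a" UNIV] by force
  ultimately show "(\<lambda>x. g + x) ` connected_component_set UNIV 0 \<subseteq> connected_component_set UNIV g"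
    by (intro connected_component_maximal) auto
next
  have "connected ((\<lambda>x. -g + x) ` connected_component_set UNIV g)"
    by (intro connected_continuous_image connected_connected_component) (auto intro!: continuous_intros)
  moreover have "0 \<in> (\<lambda>x. -g + x) ` connected_component_set UNIV g"
    using connected_component_refl[of g UNIV] by force
  ultimately have *: "(\<lambda>x. -g + x) ` connected_component_set UNIV g \<subseteq> connected_component_set UNIV 0"
    by (intro connected_component_maximal) auto
  show "connected_component_set UNIV g \<subseteq> (\<lambda>x. g + x) ` connected_component_set UNIV 0"
  proof
    fix y assume "y \<in> connected_component_set UNIV g"
    then have "-g + y \<in> connected_component_set UNIV 0" using * by blast
    then show "y \<in> (\<lambda>x. g + x) ` connected_component_set UNIV 0"
      by (intro image_eqI[of _ _ "-g + y"]) auto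
  qed
qed

lemma sep_subgroup:
  fixes r r' :: "'a::{topological_ab_group_add,t2_space}"
  assumes cpt: "compact (UNIV::'a set)"
    and ne: "(\<lambda>x. r + x) ` connected_component_set UNIV 0 \<noteq> (\<lambda>x. r' + x) ` connected_component_set UNIV 0"
  shows "\<exists>U. sgrp U \<and> open U \<and> r - r' \<notin> U"
proof -
  have "r \<notin> connected_component_set UNIV r'"
  proof
    assume "r \<in> connected_component_set UNIV r'"
    then have "connected_component_set UNIV r = connected_component_set UNIV r'"
      by (rule connected_component_eq)
    then show False using ne by (simp only: comp_translate)
  qed
  from clopen_sep[OF cpt this] obtain T where T: "open T" "closed T" "r' \<in> T" "r \<notin> T" by blast
  define T' where "T' = (\<lambda>x. x + r') -` T"
  have "open T'" unfolding T'_def by (intro open_vimage_cont T) (auto intro!: continuous_intros)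
  moreover have "closed T'" unfolding T'_def
    by (intro continuous_closed_vimage T) (auto intro!: continuous_intros)
  moreover have "0 \<in> T'" "r - r' \<notin> T'" using T unfolding T'_def by auto
  ultimately obtain U where "sgrp U" "open U" "U \<subseteq> T'"
    using open_subgroup_in_clopen[OF cpt] by metis
  then show ?thesis using \<open>r - r' \<notin> T'\<close> by blast
qed

lemma sgrp_Inter: "(\<And>U. U \<in> S \<Longrightarrow> sgrp U) \<Longrightarrow> sgrp (\<Inter>S)"
  unfolding sgrp_def by auto

lemma many_cosets:
  fixes N :: nat
  assumes cpt: "compact (UNIV::'a::{topological_ab_group_add,t2_space} set)"
    and inf: "infinite ((\<lambda>g. (\<lambda>x. g + x) ` connected_component_set UNIV (0::'a)) ` UNIV)"
  shows "\<exists>U R. sgrp U \<and> open U \<and> finite R \<and> card R = N \<and> (\<forall>r\<in>R. \<forall>r'\<in>R. r \<noteq> r' \<longrightarrow> r - r' \<notin> (U::'a set))"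
proof -
  define cos where "cos = (\<lambda>g::'a. (\<lambda>x. g + x) ` connected_component_set UNIV (0::'a))"
  obtain Q where Q: "Q \<subseteq> range cos" "finite Q" "card Q = N"
    using infinite_arbitrarily_large[OF inf[folded cos_def]] by blast
  define rep where "rep = (\<lambda>q. SOME g. cos g = q)"
  have rep: "cos (rep q) = q" if "q \<in> Q" for q
    unfolding rep_def by (rule someI_ex) (use Q(1) that in blast)
  define R where "R = rep ` Q"
  have "inj_on rep Q" by (rule inj_onI) (metis rep)
  then have cR: "card R = N" "finite R" unfolding R_def using Q by (auto simp: card_image)
  have Rne: "cos r \<noteq> cos r'" if rR: "r \<in> R" "r' \<in> R" and rr: "r \<noteq> r'" for r r'
  proof -
    obtain q q' where "q \<in> Q" "q' \<in> Q" "r = rep q" "r' = rep q'" using rR unfolding R_def by blast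
    then show ?thesis using rep rr by metis
  qed
  define P where "P = {p. fst p \<in> R \<and> snd p \<in> R \<and> fst p \<noteq> snd p}"
  have fP: "finite P"
    by (rule finite_subset[of _ "R \<times> R"]) (auto simp: P_def cR)
  have ex: "\<forall>p\<in>P. \<exists>U. sgrp U \<and> open U \<and> fst p - snd p \<notin> U"
  proof
    fix p assume "p \<in> P"
    then have "cos (fst p) \<noteq> cos (snd p)" using Rne unfolding P_def by blast
    then show "\<exists>U. sgrp U \<and> open U \<and> fst p - snd p \<notin> U"
      unfolding cos_def by (rule sep_subgroup[OF cpt])
  qed
  obtain Ug where Ug0: "\<forall>p\<in>P. sgrp (Ug p) \<and> open (Ug p) \<and> fst p - snd p \<notin> Ug p"
    using bchoice[OF ex] by blast
  have Ug: "\<And>p. p \<in> P \<Longrightarrow> sgrp (Ug p) \<and> open (Ug p) \<and> fst p - snd p \<notin> Ug p"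
    using Ug0 by blast
  define U where "U = \<Inter>(Ug ` P)"
  have "sgrp U" unfolding U_def using Ug by (intro sgrp_Inter) auto
  moreover have "open U" unfolding U_def using Ug fP by (intro open_INT) auto
  moreover have "\<forall>r\<in>R. \<forall>r'\<in>R. r \<noteq> r' \<longrightarrow> r - r' \<notin> U"
  proof (intro ballI impI)
    fix r r' assume "r \<in> R" "r' \<in> R" "r \<noteq> r'"
    then have "(r, r') \<in> P" unfolding P_def by simp
    then show "r - r' \<notin> U" using Ug[of "(r,r')"] unfolding U_def by auto
  qed
  ultimately show ?thesis using cR by blast
qed

primrec nmul :: "nat \<Rightarrow> 'a::ab_group_add \<Rightarrow> 'a" where
  "nmul 0 g = 0"
| "nmul (Suc n) g = g + nmul n g"

lemma nmul_add: "nmul (a + b) g = nmul a g + nmul b g"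
  by (induction a) (simp_all add: algebra_simps)

lemma nmul_mult: "nmul (a * b) g = nmul a (nmul b g)"
  by (induction a) (simp_all add: nmul_add)

lemma nmul_one [simp]: "nmul 1 g = g" by simp

lemma nmul_in: "sgrp H \<Longrightarrow> g \<in> H \<Longrightarrow> nmul n g \<in> H"
  by (induction n) (simp_all add: sgrp_0 sgrp_add)

definition chom :: "'a::ab_group_add set \<Rightarrow> ('a \<Rightarrow> complex) \<Rightarrow> bool" where
  "chom H c \<longleftrightarrow> (\<forall>a\<in>H. \<forall>b\<in>H. c (a + b) = c a * c b) \<and> (\<forall>a\<in>H. norm (c a) = 1)"

lemma chom_0: assumes "chom H c" "sgrp H" shows "c 0 = 1"
proof -
  have "c (0 + 0) = c 0 * c 0" using assms sgrp_0 unfolding chom_def by blast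
  moreover have "c 0 \<noteq> 0" using assms sgrp_0 unfolding chom_def by force
  ultimately show ?thesis by simp
qed

lemma chom_nmul: assumes "chom H c" "sgrp H" "y \<in> H" shows "c (nmul n y) = c y ^ n"
proof (induction n)
  case 0 then show ?case using chom_0[OF assms(1,2)] by simp
next
  case (Suc n)
  have "c (y + nmul n y) = c y * c (nmul n y)"
    using assms nmul_in[OF assms(2,3)] unfolding chom_def by blast
  then show ?case using Suc by simp
qed

lemma nmul_dvd:
  assumes H: "sgrp H" and k: "0 < k" "nmul k g \<in> H" and mn: "\<forall>j. 0 < j \<and> j < k \<longrightarrow> nmul j g \<notin> H"
    and d: "nmul d g \<in> H"
  shows "k dvd d"
proof -
  define q r where "q = d div k" and "r = d mod k"
  have dq: "d = r + q * k" unfolding q_def r_def by (rule mod_div_mult_eq[symmetric])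
  have "nmul (q * k) g \<in> H" unfolding nmul_mult by (rule nmul_in[OF H k(2)])
  moreover have "nmul d g = nmul r g + nmul (q * k) g" by (subst dq) (rule nmul_add)
  ultimately have "nmul r g = nmul d g - nmul (q * k) g" "nmul d g - nmul (q * k) g \<in> H"
    using d sgrp_diff[OF H, of "nmul d g" "nmul (q*k) g"] by (simp_all add: algebra_simps)
  then have "nmul r g \<in> H" by simp
  moreover have "r < k" unfolding r_def using k by simp
  ultimately have "r = 0" using mn by (metis gr0I)
  then show ?thesis unfolding r_def by (simp add: dvd_eq_mod_eq_0)
qed

lemma ext_step:
  fixes g :: "'a::ab_group_add"
  assumes H: "sgrp H" and c: "chom H c" and k: "0 < k" "nmul k g \<in> H"
    and mn: "\<forall>j. 0 < j \<and> j < k \<longrightarrow> nmul j g \<notin> H"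
    and z: "z ^ k = c (nmul k g)" "norm z = 1"
  shows "\<exists>c' H'. sgrp H' \<and> H \<subseteq> H' \<and> g \<in> H' \<and> chom H' c' \<and> (\<forall>a\<in>H. c' a = c a) \<and> c' g = z"
proof -
  define H' where "H' = {x. \<exists>h\<in>H. \<exists>j. x = h + nmul j g}"
  have c0: "c 0 = 1" by (rule chom_0[OF c H])
  have wd1: "c h * z ^ j = c h' * z ^ j'"
    if "h \<in> H" "h' \<in> H" "h + nmul j g = h' + nmul j' g" "j' \<le> j" for h h' j j'
  proof -
    define d where "d = j - j'"
    have jd: "j = d + j'" unfolding d_def using that(4) by simp
    have "h' = h + nmul d g" using that(3) unfolding jd nmul_add by (simp add: algebra_simps)
    then have "nmul d g = h' - h" by simp
    then have "nmul d g \<in> H" using sgrp_diff[OF H that(2,1)] by simp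
    then have "k dvd d" by (rule nmul_dvd[OF H k mn])
    then obtain q where dq: "d = k * q" by blast
    have "nmul d g = nmul q (nmul k g)" by (simp only: dq mult.commute[of k q] nmul_mult)
    then have "c (nmul d g) = c (nmul k g) ^ q" using chom_nmul[OF c H k(2)] by simp
    also have "\<dots> = z ^ d" unfolding dq z(1)[symmetric] by (simp add: power_mult)
    finally have "c h' = c h * z ^ d" using \<open>h' = h + nmul d g\<close> c that(1) \<open>nmul d g \<in> H\<close>
      unfolding chom_def by simp
    then show ?thesis unfolding jd by (simp add: power_add)
  qed
  have wd: "c h * z ^ j = c h' * z ^ j'"
    if "h \<in> H" "h' \<in> H" "h + nmul j g = h' + nmul j' g" for h h' j j'
  proof (cases "j' \<le> j")
    case True then show ?thesis using wd1 that by blast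
  next
    case False then show ?thesis using wd1[of h' h j' j] that by simp
  qed
  define rep where "rep = (\<lambda>x. SOME p. fst p \<in> H \<and> x = fst p + nmul (snd p) g)"
  define c' where "c' = (\<lambda>x. c (fst (rep x)) * z ^ snd (rep x))"
  have c'eq: "c' x = c h * z ^ j" if "h \<in> H" "x = h + nmul j g" for x h j
  proof -
    have "\<exists>p. fst p \<in> H \<and> x = fst p + nmul (snd p) g" using that by (intro exI[of _ "(h,j)"]) simp
    then have "fst (rep x) \<in> H \<and> x = fst (rep x) + nmul (snd (rep x)) g"
      unfolding rep_def by (rule someI_ex)
    then have "c (fst (rep x)) * z ^ snd (rep x) = c h * z ^ j"
      using wd[of "fst (rep x)" h "snd (rep x)" j] that by simp
    then show ?thesis unfolding c'_def .
  qed
  have "sgrp H'"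
    unfolding sgrp_def
  proof (intro conjI ballI)
    have "(0::'a) = 0 + nmul 0 g" by simp
    then show "0 \<in> H'" unfolding H'_def using sgrp_0[OF H] by blast
    fix x y assume "x \<in> H'" "y \<in> H'"
    then obtain h1 j1 h2 j2 where h: "h1 \<in> H" "h2 \<in> H" "x = h1 + nmul j1 g" "y = h2 + nmul j2 g"
      unfolding H'_def by blast
    have e: "nmul (k * j2) g = nmul ((k - 1) * j2) g + nmul j2 g"
    proof -
      have "k * j2 = (k - 1) * j2 + j2" using k(1) by (cases k) auto
      then show ?thesis using nmul_add by metis
    qed
    have e2: "nmul (k * j2) g = nmul j2 (nmul k g)" by (simp add: nmul_mult mult.commute)
    have "x - y = (h1 - h2 - nmul j2 (nmul k g)) + nmul (j1 + (k - 1) * j2) g"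
      unfolding h nmul_add e2[symmetric] e by (simp add: algebra_simps)
    moreover have "h1 - h2 - nmul j2 (nmul k g) \<in> H"
      using h H nmul_in[OF H k(2)] by (intro sgrp_diff) auto
    ultimately show "x - y \<in> H'" unfolding H'_def by blast
  qed
  moreover have "H \<subseteq> H'"
  proof
    fix a assume "a \<in> H"
    moreover have "a = a + nmul 0 g" by simp
    ultimately show "a \<in> H'" unfolding H'_def by blast
  qed
  moreover have "g \<in> H'"
  proof -
    have "g = 0 + nmul 1 g" by simp
    then show ?thesis unfolding H'_def using sgrp_0[OF H] by blast
  qed
  moreover have "chom H' c'"
    unfolding chom_def
  proof (intro conjI ballI)
    fix x y assume "x \<in> H'" "y \<in> H'"
    then obtain h1 j1 h2 j2 where h: "h1 \<in> H" "h2 \<in> H" "x = h1 + nmul j1 g" "y = h2 + nmul j2 g"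
      unfolding H'_def by blast
    have "x + y = (h1 + h2) + nmul (j1 + j2) g" unfolding h nmul_add by (simp add: algebra_simps)
    then have "c' (x + y) = c (h1 + h2) * z ^ (j1 + j2)" using c'eq sgrp_add[OF H h(1,2)] by blast
    also have "\<dots> = (c h1 * z ^ j1) * (c h2 * z ^ j2)" using c h(1,2) unfolding chom_def
      by (simp add: power_add)
    also have "\<dots> = c' x * c' y" using c'eq[OF h(1) h(3)] c'eq[OF h(2) h(4)] by simp
    finally show "c' (x + y) = c' x * c' y" .
  next
    fix x assume "x \<in> H'"
    then obtain h1 j1 where h: "h1 \<in> H" "x = h1 + nmul j1 g" unfolding H'_def by blast
    have "c' x = c h1 * z ^ j1" using c'eq h by blast
    then show "norm (c' x) = 1" using c h(1) z(2) unfolding chom_def by (simp add: norm_mult norm_power)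
  qed
  moreover have "\<forall>a\<in>H. c' a = c a"
  proof
    fix a assume "a \<in> H"
    then show "c' a = c a" using c'eq[of a a 0] by simp
  qed
  moreover have "c' g = z" using c'eq[of 0 g 1] sgrp_0[OF H] c0 by simp
  ultimately show ?thesis by blast
qed

lemma finite_reps:
  fixes U :: "'a::{topological_ab_group_add,t2_space} set"
  assumes cpt: "compact (UNIV::'a set)" and oU: "open U" and U: "sgrp U"
  shows "\<exists>R. finite R \<and> (\<forall>x. \<exists>r\<in>R. x - r \<in> U)"
proof -
  have cov: "UNIV \<subseteq> (\<Union>r\<in>UNIV. (\<lambda>x. x - r) -` U)"
  proof
    fix x :: 'a
    have "x \<in> (\<lambda>y. y - x) -` U" using sgrp_0[OF U] by simp
    then show "x \<in> (\<Union>r\<in>UNIV. (\<lambda>x. x - r) -` U)" by blast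
  qed
  have opn: "\<And>r. open ((\<lambda>x. x - r) -` U)"
    by (intro open_vimage_cont oU) (auto intro!: continuous_intros)
  obtain R where "R \<subseteq> UNIV" "finite R" "UNIV \<subseteq> (\<Union>r\<in>R. (\<lambda>x. x - r) -` U)"
    using compactE_image[OF cpt opn cov] by blast
  then show ?thesis by blast
qed

lemma exists_nmul_in:
  fixes U :: "'a::ab_group_add set"
  assumes U: "sgrp U" and R: "finite R" "\<forall>x. \<exists>r\<in>R. x - r \<in> U"
  shows "\<exists>k. 0 < k \<and> k \<le> card R \<and> nmul k g \<in> U"
proof -
  obtain f where f: "\<And>x. f x \<in> R \<and> x - f x \<in> U" using R(2) by metis
  define F where "F = (\<lambda>j. f (nmul j g))"
  have "F ` {0..card R} \<subseteq> R" unfolding F_def using f by auto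
  then have "card (F ` {0..card R}) \<le> card R" using R(1) card_mono by blast
  then have "card (F ` {0..card R}) < card {0..card R}" by simp
  then have "\<not> inj_on F {0..card R}" using pigeonhole by blast
  then obtain a b where ab: "a \<in> {0..card R}" "b \<in> {0..card R}" "a \<noteq> b" "F a = F b"
    unfolding inj_on_def by blast
  show ?thesis
  proof (cases "a < b")
    case True
    have "nmul (b - a) g \<in> U"
    proof -
      have "nmul a g - F a \<in> U" "nmul b g - F b \<in> U" unfolding F_def using f by auto
      then have "(nmul b g - F b) - (nmul a g - F a) \<in> U" using sgrp_diff[OF U] by blast
      moreover have "nmul b g = nmul (b - a) g + nmul a g" using True nmul_add
        by (metis le_add_diff_inverse2 less_imp_le)
      ultimately show ?thesis using ab(4) by (simp add: algebra_simps)
    qed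
    then show ?thesis using True ab by (intro exI[of _ "b - a"]) auto
  next
    case False
    then have "b < a" using ab(3) by simp
    have "nmul (a - b) g \<in> U"
    proof -
      have "nmul a g - F a \<in> U" "nmul b g - F b \<in> U" unfolding F_def using f by auto
      then have "(nmul a g - F a) - (nmul b g - F b) \<in> U" using sgrp_diff[OF U] by blast
      moreover have "nmul a g = nmul (a - b) g + nmul b g" using \<open>b < a\<close> nmul_add
        by (metis le_add_diff_inverse2 less_imp_le)
      ultimately show ?thesis using ab(4) by (simp add: algebra_simps)
    qed
    then show ?thesis using \<open>b < a\<close> ab by (intro exI[of _ "a - b"]) auto
  qed
qed

lemma root_exists:
  fixes w :: complex
  assumes k: "0 < k" and w: "norm w = 1"
  shows "\<exists>z. z ^ k = w \<and> norm z = 1"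
proof -
  have w0: "w \<noteq> 0" using w by auto
  define z where "z = exp (Ln w / of_nat k)"
  have "z ^ k = exp (of_nat k * (Ln w / of_nat k))" unfolding z_def by (rule exp_of_nat_mult[symmetric])
  also have "\<dots> = exp (Ln w)" using k by simp
  also have "\<dots> = w" using w0 by simp
  finally have "z ^ k = w" .
  moreover have "norm z = 1" unfolding z_def norm_exp_eq_Re using w0 w
    by (simp add: Re_divide_of_nat)
  ultimately show ?thesis by blast
qed

lemma ext_global:
  fixes U :: "'a::ab_group_add set"
  assumes U: "sgrp U" and R: "finite R" "\<forall>x. \<exists>r\<in>R. x - r \<in> U"
    and kx: "\<forall>g. \<exists>k. 0 < k \<and> nmul k g \<in> U"
  shows "sgrp H \<Longrightarrow> U \<subseteq> H \<Longrightarrow> chom H c \<Longrightarrow> \<exists>c'. chom UNIV c' \<and> (\<forall>a\<in>H. c' a = c a)"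
proof (induction "card (R - H)" arbitrary: H c rule: less_induct)
  case less
  show ?case
  proof (cases "R \<subseteq> H")
    case True
    have "H = UNIV"
    proof (intro set_eqI iffI)
      fix x :: 'a
      obtain r where "r \<in> R" "x - r \<in> U" using R(2) by blast
      then have "(x - r) + r \<in> H" using True less.prems(1,2) by (intro sgrp_add) auto
      then show "x \<in> H" by simp
    qed simp
    then show ?thesis using less.prems(3) by blast
  next
    case False
    then obtain g where g: "g \<in> R" "g \<notin> H" by blast
    define k where "k = (LEAST k. 0 < k \<and> nmul k g \<in> H)"
    have ex: "\<exists>k. 0 < k \<and> nmul k g \<in> H" using kx less.prems(2) by blast
    have k: "0 < k \<and> nmul k g \<in> H" unfolding k_def by (rule LeastI_ex[OF ex])
    have mn: "\<forall>j. 0 < j \<and> j < k \<longrightarrow> nmul j g \<notin> H" unfolding k_def using not_less_Least by blast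
    have nw: "norm (c (nmul k g)) = 1" using less.prems(3) k unfolding chom_def by blast
    obtain z where z: "z ^ k = c (nmul k g)" "norm z = 1" using root_exists[OF _ nw] k by blast
    obtain c'' H' where H': "sgrp H'" "H \<subseteq> H'" "g \<in> H'" "chom H' c''" "\<forall>a\<in>H. c'' a = c a"
      using ext_step[OF less.prems(1) less.prems(3) conjunct1[OF k] conjunct2[OF k] mn z] by blast
    have "R - H' \<subset> R - H" using H'(2,3) g by blast
    then have "card (R - H') < card (R - H)" using R(1) by (intro psubset_card_mono) auto
    then obtain c' where "chom UNIV c'" "\<forall>a\<in>H'. c' a = c'' a"
      using less.hyps[OF _ H'(1) _ H'(4)] H'(2) less.prems(2) by blast
    then show ?thesis using H'(2,5) by (intro exI[of _ c']) auto
  qed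
qed

lemma sep_char:
  fixes U :: "'a::ab_group_add set"
  assumes U: "sgrp U" and R: "finite R" "\<forall>x. \<exists>r\<in>R. x - r \<in> U"
    and kx: "\<forall>g. \<exists>k. 0 < k \<and> nmul k g \<in> U" and x: "x \<notin> U"
  shows "\<exists>c. chom UNIV c \<and> (\<forall>u\<in>U. c u = 1) \<and> c x \<noteq> 1"
proof -
  define k where "k = (LEAST k. 0 < k \<and> nmul k x \<in> U)"
  have ex: "\<exists>k. 0 < k \<and> nmul k x \<in> U" using kx by blast
  have k: "0 < k \<and> nmul k x \<in> U" unfolding k_def by (rule LeastI_ex[OF ex])
  have mn: "\<forall>j. 0 < j \<and> j < k \<longrightarrow> nmul j x \<notin> U" unfolding k_def using not_less_Least by blast
  have "k \<noteq> 1" using k x by auto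
  then have k2: "2 \<le> k" using k by simp
  have c1: "chom U (\<lambda>_. 1)" unfolding chom_def by simp
  define z where "z = exp (2 * of_real pi * \<i> / of_nat k)"
  have "z ^ k = exp (of_nat k * (2 * of_real pi * \<i> / of_nat k))" unfolding z_def
    by (rule exp_of_nat_mult[symmetric])
  also have "\<dots> = exp (2 * of_real pi * \<i>)" using k by simp
  also have "\<dots> = 1" by simp
  finally have z1: "z ^ k = (\<lambda>_. 1) (nmul k x)" by simp
  have z2: "norm z = 1" unfolding z_def norm_exp_eq_Re by simp
  have z3: "z \<noteq> 1"
  proof
    assume "z = 1"
    then obtain n :: int where n: "2 * pi / real k = of_int (2 * n) * pi"
      unfolding z_def exp_eq_1 by (auto simp: Im_divide_of_nat)
    then have "pi * (2 / real k) = pi * (2 * of_int n)" by (simp add: mult_ac)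
    then have "2 / real k = 2 * of_int n" by (metis mult_left_cancel pi_neq_zero)
    then have "1 / real k = of_int n" by simp
    moreover have "0 < 1 / real k" "1 / real k < 1" using k2 by auto
    ultimately show False by (metis of_int_0_less_iff of_int_less_1_iff not_less zero_less_one_class.zero_le_one int_one_le_iff_zero_less of_int_1_le_iff)
  qed
  obtain c'' H' where H': "sgrp H'" "U \<subseteq> H'" "x \<in> H'" "chom H' c''" "\<forall>a\<in>U. c'' a = 1" "c'' x = z"
    using ext_step[OF U c1 conjunct1[OF k] conjunct2[OF k] mn z1 z2] by auto
  obtain c where c: "chom UNIV c" "\<forall>a\<in>H'. c a = c'' a"
    using ext_global[OF U R kx H'(1,2,4)] by blast
  then show ?thesis using H' z3 by (intro exI[of _ c]) auto
qed

lemma chom_character: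
  fixes U :: "'a::{topological_ab_group_add,t2_space} set"
  assumes U: "sgrp U" "open U" and c: "chom UNIV c" "\<forall>u\<in>U. c u = 1"
  shows "character c"
proof -
  have cont: "continuous_on UNIV c"
    unfolding continuous_on_topological
  proof (intro ballI allI impI)
    fix x :: 'a and B assume "open B" "c x \<in> B"
    define A where "A = (\<lambda>y. y - x) -` U"
    have "open A" unfolding A_def by (intro open_vimage_cont U) (auto intro!: continuous_intros)
    moreover have "x \<in> A" unfolding A_def using sgrp_0[OF U(1)] by simp
    moreover have "c y \<in> B" if "y \<in> A" for y
    proof -
      have "c (x + (y - x)) = c x * c (y - x)" using c(1) unfolding chom_def by blast
      moreover have "c (y - x) = 1" using that c(2) unfolding A_def by simp
      ultimately have "c y = c x" by simp
      then show ?thesis using \<open>c x \<in> B\<close> by simp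
    qed
    ultimately show "\<exists>A. open A \<and> x \<in> A \<and> (\<forall>y\<in>UNIV. y \<in> A \<longrightarrow> c y \<in> B)" by blast
  qed
  then show ?thesis using c(1) unfolding character_def chom_def by blast
qed

lemma haar_facts:
  assumes "haar_prob M"
  shows "prob_space M" "sets M = sets borel" "space M = UNIV"
    "\<And>g A. A \<in> sets borel \<Longrightarrow> measure M ((\<lambda>x. g + x) ` A) = measure M A"
proof -
  show "prob_space M" "sets M = sets borel" using assms unfolding haar_prob_def by blast+
  then show "space M = UNIV" by (metis sets_eq_imp_space_eq space_borel)
  show "\<And>g A. A \<in> sets borel \<Longrightarrow> measure M ((\<lambda>x. g + x) ` A) = measure M A"
    using assms unfolding haar_prob_def by blast
qed

lemma haar_cont_meas:
  fixes M :: "'a::topological_ab_group_add measure" and f :: "'a \<Rightarrow> 'b::topological_space"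
  assumes "haar_prob M" "continuous_on UNIV f"
  shows "f \<in> borel_measurable M"
proof -
  have "f \<in> borel_measurable borel" by (rule borel_measurable_continuous_onI[OF assms(2)])
  moreover have "(borel_measurable M :: ('a \<Rightarrow> 'b) set) = borel_measurable borel"
    by (rule measurable_cong_sets) (simp_all add: haar_facts(2)[OF assms(1)])
  ultimately show ?thesis by simp
qed

lemma translate_img: "(\<lambda>x. g + x) ` A = (\<lambda>x. x - g) -` (A::'a::ab_group_add set)"
proof
  show "(\<lambda>x. g + x) ` A \<subseteq> (\<lambda>x. x - g) -` A" by auto
  show "(\<lambda>x. x - g) -` A \<subseteq> (\<lambda>x. g + x) ` A"
  proof
    fix y assume "y \<in> (\<lambda>x. x - g) -` A"
    then have "y - g \<in> A" by simp
    moreover have "y = g + (y - g)" by simp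
    ultimately show "y \<in> (\<lambda>x. g + x) ` A" by blast
  qed
qed

lemma haar_distr:
  fixes M :: "'a::{topological_ab_group_add,t2_space} measure"
  assumes h: "haar_prob M"
  shows "distr M M (\<lambda>x. g + x) = M"
proof -
  interpret prob_space M using haar_facts(1)[OF h] .
  have meas: "(\<lambda>x. g + x) \<in> measurable M M"
  proof -
    have "(\<lambda>x. g + x) \<in> borel_measurable borel"
      by (intro borel_measurable_continuous_onI) (auto intro!: continuous_intros)
    then show ?thesis using measurable_cong_sets[OF haar_facts(2)[OF h] haar_facts(2)[OF h]] by simp
  qed
  show ?thesis
  proof (rule measure_eqI)
    show "sets (distr M M (\<lambda>x. g + x)) = sets M" by simp
    fix A assume "A \<in> sets (distr M M (\<lambda>x. g + x))"
    then have A: "A \<in> sets M" by simp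
    then have Ab: "A \<in> sets borel" using haar_facts(2)[OF h] by simp
    have "emeasure (distr M M (\<lambda>x. g + x)) A = emeasure M ((\<lambda>x. g + x) -` A \<inter> space M)"
      by (rule emeasure_distr[OF meas A])
    also have "(\<lambda>x. g + x) -` A \<inter> space M = (\<lambda>x. (- g) + x) ` A"
      using haar_facts(3)[OF h] translate_img[of "- g" A] by (auto simp: add.commute)
    also have "emeasure M ((\<lambda>x. (- g) + x) ` A) = ennreal (measure M ((\<lambda>x. (- g) + x) ` A))"
      by (rule emeasure_eq_measure)
    also have "measure M ((\<lambda>x. (- g) + x) ` A) = measure M A" using haar_facts(4)[OF h Ab] .
    finally show "emeasure (distr M M (\<lambda>x. g + x)) A = emeasure M A"
      by (simp add: emeasure_eq_measure)
  qed
qed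

lemma haar_integral_translate:
  fixes M :: "'a::{topological_ab_group_add,t2_space} measure" and f :: "'a \<Rightarrow> complex"
  assumes h: "haar_prob M" and f: "f \<in> borel_measurable M"
  shows "(\<integral>x. f (g + x) \<partial>M) = (\<integral>x. f x \<partial>M)"
proof -
  have meas: "(\<lambda>x. g + x) \<in> measurable M M"
  proof -
    have "(\<lambda>x. g + x) \<in> borel_measurable borel"
      by (intro borel_measurable_continuous_onI) (auto intro!: continuous_intros)
    then show ?thesis using measurable_cong_sets[OF haar_facts(2)[OF h] haar_facts(2)[OF h]] by simp
  qed
  have "(\<integral>x. f (g + x) \<partial>M) = integral\<^sup>L (distr M M (\<lambda>x. g + x)) f"
    by (rule integral_distr[OF meas f, symmetric])
  also have "\<dots> = integral\<^sup>L M f" using haar_distr[OF h] by simp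
  finally show ?thesis .
qed

lemma character_integral:
  fixes M :: "'a::{topological_ab_group_add,t2_space} measure"
  assumes h: "haar_prob M" and c: "character c" and nt: "c g \<noteq> 1"
  shows "(\<integral>x. c x \<partial>M) = 0"
proof -
  interpret prob_space M using haar_facts(1)[OF h] .
  have cm: "c \<in> borel_measurable M" using haar_cont_meas[OF h] c unfolding character_def by blast
  have "(\<integral>x. c x \<partial>M) = (\<integral>x. c (g + x) \<partial>M)" using haar_integral_translate[OF h cm] by simp
  also have "\<dots> = (\<integral>x. c g * c x \<partial>M)" using c unfolding character_def by simp
  also have "\<dots> = c g * (\<integral>x. c x \<partial>M)" by simp
  finally have "(1 - c g) * (\<integral>x. c x \<partial>M) = 0" by (simp add: algebra_simps)
  then show ?thesis using nt by simp
qed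

lemma character_integrable:
  fixes M :: "'a::{topological_ab_group_add,t2_space} measure"
  assumes h: "haar_prob M" and c: "character c"
  shows "integrable M c"
proof -
  interpret prob_space M using haar_facts(1)[OF h] .
  have cm: "c \<in> borel_measurable M" using haar_cont_meas[OF h] c unfolding character_def by blast
  show ?thesis using c unfolding character_def by (intro integrable_const_bound[where B=1] cm) auto
qed

lemma character_chom: "character c \<Longrightarrow> chom UNIV c"
  unfolding character_def chom_def by blast

lemma sgrp_UNIV: "sgrp UNIV" unfolding sgrp_def by simp

lemma character_one: "character (\<lambda>_. 1)"
  unfolding character_def by simp

lemma character_mult: "character c1 \<Longrightarrow> character c2 \<Longrightarrow> character (\<lambda>x. c1 x * c2 x)"
  unfolding character_def by (auto intro: continuous_on_mult simp: norm_mult)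

lemma chars_finite:
  fixes U :: "'a::{topological_ab_group_add} set"
  assumes U: "sgrp U" and R: "finite R" "\<forall>x. \<exists>r\<in>R. x - r \<in> U"
    and m: "0 < m" "\<forall>g. nmul m g \<in> U"
  shows "finite {c. character c \<and> (\<forall>u\<in>U. c u = 1)}"
proof -
  define G where "G = {c. character c \<and> (\<forall>u\<in>U. c u = 1)}"
  have eqr: "c x = c r" if "c \<in> G" "x - r \<in> U" for c x r
  proof -
    have "c (r + (x - r)) = c r * c (x - r)" using that(1) unfolding G_def character_def by blast
    then show ?thesis using that unfolding G_def by simp
  qed
  have inj: "inj_on (\<lambda>c. restrict c R) G"
  proof (rule inj_onI)
    fix c1 c2 assume c: "c1 \<in> G" "c2 \<in> G" "restrict c1 R = restrict c2 R"
    show "c1 = c2"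
    proof
      fix x
      obtain r where r: "r \<in> R" "x - r \<in> U" using R(2) by blast
      have "c1 r = c2 r" using c(3) r(1) by (metis restrict_apply')
      then show "c1 x = c2 x" using eqr[OF c(1) r(2)] eqr[OF c(2) r(2)] by simp
    qed
  qed
  have sub: "(\<lambda>c. restrict c R) ` G \<subseteq> (\<Pi>\<^sub>E r\<in>R. {z::complex. z ^ m = 1})"
  proof
    fix f assume "f \<in> (\<lambda>c. restrict c R) ` G"
    then obtain c where c: "c \<in> G" "f = restrict c R" by blast
    have "c r ^ m = 1" for r
    proof -
      have "c (nmul m r) = c r ^ m"
        using chom_nmul[OF character_chom sgrp_UNIV] c(1) unfolding G_def by blast
      moreover have "c (nmul m r) = 1" using m(2) c(1) unfolding G_def by blast
      ultimately show ?thesis by simp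
    qed
    then show "f \<in> (\<Pi>\<^sub>E r\<in>R. {z::complex. z ^ m = 1})" using c(2) by auto
  qed
  have "finite (\<Pi>\<^sub>E r\<in>R. {z::complex. z ^ m = 1})"
    using R(1) m(1) by (intro finite_PiE finite_roots_unity) auto
  then have "finite ((\<lambda>c. restrict c R) ` G)" using sub finite_subset by blast
  then show ?thesis using inj finite_imageD unfolding G_def by blast
qed

lemma sum_chars_zero:
  fixes G :: "('a::topological_ab_group_add \<Rightarrow> complex) set"
  assumes fin: "finite G" and cl: "\<forall>c1\<in>G. \<forall>c2\<in>G. (\<lambda>x. c1 x * c2 x) \<in> G"
    and ch: "\<forall>c\<in>G. character c" and psi: "\<psi> \<in> G" "\<psi> x \<noteq> 1"
  shows "(\<Sum>c\<in>G. c x) = 0"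
proof -
  define f where "f = (\<lambda>c. (\<lambda>y. \<psi> y * c y))"
  have inj: "inj_on f G"
  proof (rule inj_onI)
    fix c1 c2 assume "c1 \<in> G" "c2 \<in> G" "f c1 = f c2"
    show "c1 = c2"
    proof
      fix y
      have "\<psi> y * c1 y = \<psi> y * c2 y" using \<open>f c1 = f c2\<close> unfolding f_def by metis
      moreover have "norm (\<psi> y) = 1" using ch psi(1) unfolding character_def by blast
      then have "\<psi> y \<noteq> 0" by auto
      ultimately show "c1 y = c2 y" by simp
    qed
  qed
  have "f ` G \<subseteq> G" unfolding f_def using cl psi(1) by blast
  then have img: "f ` G = G" using endo_inj_surj[OF fin _ inj] by blast
  have "(\<Sum>c\<in>G. c x) = (\<Sum>c\<in>f ` G. c x)" using img by simp
  also have "\<dots> = (\<Sum>c\<in>G. f c x)" by (rule sum.reindex[OF inj, unfolded comp_def])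
  also have "\<dots> = \<psi> x * (\<Sum>c\<in>G. c x)" unfolding f_def by (simp add: sum_distrib_left)
  finally have "(1 - \<psi> x) * (\<Sum>c\<in>G. c x) = 0" by (simp add: algebra_simps)
  then show ?thesis using psi(2) by simp
qed

lemma small_mahler:
  fixes M :: "'a::{topological_ab_group_add,t2_space} measure" and U R' :: "'a set"
  assumes cpt: "compact (UNIV::'a set)" and h: "haar_prob M" and U: "sgrp U" "open U"
    and R': "finite R'" "card R' = N" "\<forall>r\<in>R'. \<forall>r'\<in>R'. r \<noteq> r' \<longrightarrow> r - r' \<notin> U"
  shows "\<exists>f n. f \<in> int_char_poly \<and> N \<le> n \<and> 1 \<le> n \<and> mahler M f = ereal (ln (1 + real n) / real n)"
proof -
  interpret prob_space M using haar_facts(1)[OF h] .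
  have spM: "space M = UNIV" and setsM: "sets M = sets borel" using haar_facts[OF h] by auto
  obtain R where R: "finite R" "\<forall>x. \<exists>r\<in>R. x - r \<in> U" using finite_reps[OF cpt U(2,1)] by blast
  have kx: "\<exists>k. 0 < k \<and> k \<le> card R \<and> nmul k g \<in> U" for g using exists_nmul_in[OF U(1) R] by blast
  have kx': "\<forall>g. \<exists>k. 0 < k \<and> nmul k g \<in> U" using kx by blast
  define m :: nat where "m = fact (card R)"
  have m0: "0 < m" unfolding m_def by simp
  have mU: "\<forall>g. nmul m g \<in> U"
  proof
    fix g
    obtain k where k: "0 < k" "k \<le> card R" "nmul k g \<in> U" using kx by blast
    then have "k dvd m" unfolding m_def by (intro dvd_fact) auto
    then obtain q where "m = k * q" by blast
    then have "nmul m g = nmul q (nmul k g)" by (simp only: mult.commute[of k q] nmul_mult)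
    then show "nmul m g \<in> U" using nmul_in[OF U(1) k(3)] by simp
  qed
  define G where "G = {c. character c \<and> (\<forall>u\<in>U. c u = (1::complex))}"
  have finG: "finite G" unfolding G_def by (rule chars_finite[OF U(1) R m0 mU])
  define one :: "'a \<Rightarrow> complex" where "one = (\<lambda>_. 1)"
  have oneG: "one \<in> G" unfolding G_def one_def using character_one by simp
  have clG: "\<forall>c1\<in>G. \<forall>c2\<in>G. (\<lambda>x. c1 x * c2 x) \<in> G" unfolding G_def using character_mult by auto
  have chG: "\<forall>c\<in>G. character c" unfolding G_def by blast
  define n where "n = card G"
  have n1: "1 \<le> n" unfolding n_def using finG oneG by (metis card_0_eq empty_iff less_one not_le)
  have sumid: "(\<Sum>c\<in>G. c x) = complex_of_real (real n * indicator U x)" for x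
  proof (cases "x \<in> U")
    case True
    then have "(\<Sum>c\<in>G. c x) = (\<Sum>c\<in>G. 1)" unfolding G_def by (intro sum.cong) auto
    then show ?thesis using True unfolding n_def by simp
  next
    case False
    obtain c where c: "chom UNIV c" "\<forall>u\<in>U. c u = 1" "c x \<noteq> 1" using sep_char[OF U(1) R kx' False] by blast
    have cG: "c \<in> G" unfolding G_def using chom_character[OF U c(1,2)] c(2) by blast
    have "(\<Sum>c\<in>G. c x) = 0" by (rule sum_chars_zero[OF finG clG chG cG c(3)])
    then show ?thesis using False by simp
  qed
  have Umeas: "U \<in> sets M" using U(2) setsM by simp
  have int1: "(\<integral>x. (\<Sum>c\<in>G. c x) \<partial>M) = 1"
  proof -
    have "(\<integral>x. (\<Sum>c\<in>G. c x) \<partial>M) = (\<Sum>c\<in>G. (\<integral>x. c x \<partial>M))"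
      using Bochner_Integration.integral_sum[where I=G and f="\<lambda>c x. c x" and M=M] character_integrable[OF h] chG by auto
    also have "\<dots> = (\<Sum>c\<in>G. (if c = one then 1 else 0))"
    proof (intro sum.cong refl)
      fix c assume cG: "c \<in> G"
      show "(\<integral>x. c x \<partial>M) = (if c = one then 1 else 0)"
      proof (cases "c = one")
        case True then show ?thesis using prob_space unfolding one_def by simp
      next
        case False
        then obtain g where "c g \<noteq> 1" unfolding one_def by (metis ext)
        moreover have "character c" using cG chG by blast
        ultimately have "(\<integral>x. c x \<partial>M) = 0" using character_integral[OF h] by blast
        then show ?thesis using False by simp
      qed
    qed
    also have "\<dots> = 1" using finG oneG by simp
    finally show ?thesis .
  qed
  have "(\<integral>x. (\<Sum>c\<in>G. c x) \<partial>M) = complex_of_real (real n * measure M U)"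
    unfolding sumid using spM by simp
  then have "complex_of_real (real n * measure M U) = 1" using int1 by simp
  then have nmu: "real n * measure M U = 1" by (metis of_real_eq_1_iff)
  define T where "T = (\<lambda>r. (\<lambda>x. r + x) ` U)"
  have Tmeas: "T r \<in> sets M" for r
  proof -
    have "open ((\<lambda>x. x - r) -` U)" by (intro open_vimage_cont U) (auto intro!: continuous_intros)
    then show ?thesis unfolding T_def translate_img using setsM by simp
  qed
  have Tm: "measure M (T r) = measure M U" for r
    unfolding T_def using haar_facts(4)[OF h] Umeas setsM by simp
  have disj: "disjoint_family_on T R'"
    unfolding disjoint_family_on_def
  proof (intro ballI impI)
    fix r r' assume rr: "r \<in> R'" "r' \<in> R'" "r \<noteq> r'"
    show "T r \<inter> T r' = {}"
    proof (rule ccontr)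
      assume "T r \<inter> T r' \<noteq> {}"
      then obtain u u' where uu: "u \<in> U" "u' \<in> U" "r + u = r' + u'" unfolding T_def by blast
      then have "r - r' = u' - u" by (simp add: algebra_simps)
      then have "r - r' \<in> U" using sgrp_diff[OF U(1) uu(2,1)] by simp
      then show False using R'(3) rr by blast
    qed
  qed
  have "measure M (\<Union>r\<in>R'. T r) = (\<Sum>r\<in>R'. measure M (T r))"
    using R'(1) Tmeas disj by (intro measure_finite_Union) auto
  also have "\<dots> = real N * measure M U" using Tm R'(2) by simp
  finally have "real N * measure M U \<le> 1" using prob_le_1 by metis
  moreover have mpos: "0 < measure M U" using nmu measure_nonneg[of M U] by (metis less_eq_real_def mult_zero_right zero_neq_one)
  ultimately have "real N * measure M U \<le> real n * measure M U" using nmu by simp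
  then have Nn: "N \<le> n" using mpos by simp
  define cf where "cf = (\<lambda>ch. if ch = one then (2::int) else 1)"
  define f where "f = (\<lambda>x. \<Sum>ch\<in>G. of_int (cf ch) * ch x)"
  have fin: "f \<in> int_char_poly" unfolding int_char_poly_def f_def using finG chG by blast
  have fx: "f x = 1 + complex_of_real (real n * indicator U x)" for x
  proof -
    have "f x = (\<Sum>ch\<in>G. ch x + (if ch = one then 1 else 0))"
      unfolding f_def cf_def by (intro sum.cong refl) (auto simp: one_def)
    also have "\<dots> = (\<Sum>ch\<in>G. ch x) + 1" using finG oneG by (simp add: sum.distrib)
    finally show ?thesis using sumid by simp
  qed
  have nn: "cmod (1 + complex_of_nat n) = 1 + real n"
  proof -
    have "cmod (1 + complex_of_nat n) = cmod (of_nat (Suc n) :: complex)" by simp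
    also have "\<dots> = real (Suc n)" by (rule norm_of_nat)
    finally show ?thesis by simp
  qed
  have lnf: "ln (norm (f x)) = ln (1 + real n) * indicator U x" for x
    unfolding fx by (cases "x \<in> U") (simp_all add: nn)
  have fnz: "f x \<noteq> 0" for x
  proof -
    have "Re (f x) = 1 + real n * indicator U x" unfolding fx by simp
    moreover have "0 \<le> real n * indicator U x" by simp
    ultimately have "Re (f x) \<noteq> 0" by linarith
    then show ?thesis by auto
  qed
  have integ: "integrable M (\<lambda>x. ln (norm (f x)))"
  proof -
    have "emeasure M U < \<top>" using emeasure_finite[of U] top.not_eq_extremum by blast
    then show ?thesis
      unfolding lnf using Umeas by (intro integrable_mult_right integrable_real_indicator) auto
  qed
  have "(\<integral>x. ln (norm (f x)) \<partial>M) = ln (1 + real n) * measure M U"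
    unfolding lnf using spM by simp
  also have "\<dots> = ln (1 + real n) / real n" using nmu n1 by (simp add: field_simps)
  finally have "mahler M f = ereal (ln (1 + real n) / real n)"
    unfolding mahler_def using integ fnz by simp
  then show ?thesis using fin Nn n1 by blast
qed

lemma ln_bound:
  assumes n: "1 \<le> (n::nat)"
  shows "ln (1 + real n) / real n \<le> 2 / sqrt (real n)"
proof -
  have x0: "0 < real n" using n by simp
  have "ln (1 + real n) = 2 * ln (sqrt (1 + real n))" using x0 by (simp add: ln_sqrt)
  also have "ln (sqrt (1 + real n)) \<le> sqrt (1 + real n) - 1" using x0 by (intro ln_le_minus_one) simp
  also have "sqrt (1 + real n) \<le> sqrt 1 + sqrt (real n)" by (rule sqrt_add_le_add_sqrt) auto
  finally have "ln (1 + real n) \<le> 2 * (sqrt 1 + sqrt (real n) - 1)" by simp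
  then have "ln (1 + real n) \<le> 2 * sqrt (real n)" by simp
  then have "ln (1 + real n) / real n \<le> 2 * sqrt (real n) / real n"
    by (rule divide_right_mono) (use x0 in simp)
  also have "2 * sqrt (real n) / real n = 2 / sqrt (real n)"
  proof -
    have s: "sqrt (real n) * sqrt (real n) = real n" using x0 by simp
    have "0 < sqrt (real n)" using x0 by simp
    then show ?thesis by (subst s[symmetric]) (simp add: field_simps)
  qed
  finally show ?thesis .
qed

theorem theorem5p1:
  fixes M :: "'a::{topological_ab_group_add, t2_space} measure"
  assumes "compact (UNIV :: 'a set)"
    and "haar_prob M"
    and "infinite ((\<lambda>g. (\<lambda>x. g + x) ` connected_component_set UNIV (0::'a)) ` UNIV)"
  shows "lehmer_const M = 0"
proof -
  define S where "S = {mahler M f |f. f \<in> int_char_poly \<and> mahler M f > 0}"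
  have lo: "0 \<le> Inf S" unfolding S_def by (rule Inf_greatest) auto
  have ex: "\<exists>n. N \<le> n \<and> 1 \<le> n \<and> ereal (ln (1 + real n) / real n) \<in> S" for N
  proof -
    obtain U R' where UR: "sgrp U" "open U" "finite R'" "card R' = N"
      "\<forall>r\<in>R'. \<forall>r'\<in>R'. r \<noteq> r' \<longrightarrow> r - r' \<notin> (U::'a set)"
      using many_cosets[OF assms(1) assms(3), of N] by metis
    obtain f n where fn: "f \<in> int_char_poly" "N \<le> n" "1 \<le> n" "mahler M f = ereal (ln (1 + real n) / real n)"
      using small_mahler[OF assms(1) assms(2) UR] by blast
    have "0 < ln (1 + real n) / real n" using fn(3) by (intro divide_pos_pos) auto
    then have "mahler M f > 0" using fn(4) by simp
    then have "mahler M f \<in> S" unfolding S_def using fn(1) by blast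
    then have "ereal (ln (1 + real n) / real n) \<in> S" using fn(4) by simp
    then show ?thesis using fn(2,3) by blast
  qed
  have hi: "Inf S \<le> 0"
  proof (rule ereal_le_epsilon2)
    fix e :: real assume e: "0 < e"
    define N where "N = nat \<lceil>(2 / e)\<^sup>2\<rceil> + 1"
    obtain n where n: "N \<le> n" "1 \<le> n" "ereal (ln (1 + real n) / real n) \<in> S" using ex by blast
    have "(2 / e)\<^sup>2 \<le> of_int \<lceil>(2 / e)\<^sup>2\<rceil>" by (rule le_of_int_ceiling)
    also have "(of_int \<lceil>(2 / e)\<^sup>2\<rceil> :: real) \<le> real (nat \<lceil>(2 / e)\<^sup>2\<rceil>)" by simp
    also have "\<dots> < real n" using n(1) unfolding N_def by simp
    finally have "(2 / e)\<^sup>2 < real n" .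
    then have "2 / e < sqrt (real n)" by (rule real_less_rsqrt)
    then have "2 < sqrt (real n) * e" using e by (simp add: pos_divide_less_eq)
    moreover have sp: "0 < sqrt (real n)" using n(2) by simp
    ultimately have "2 / sqrt (real n) < e" by (simp add: pos_divide_less_eq mult.commute)
    then have "ln (1 + real n) / real n < e" using ln_bound[OF n(2)] by linarith
    then have "ereal (ln (1 + real n) / real n) \<le> ereal e" by simp
    then have "Inf S \<le> ereal e" using Inf_lower[OF n(3)] by (rule order_trans[rotated])
    then show "Inf S \<le> 0 + ereal e" by simp
  qed
  show ?thesis unfolding lehmer_const_def S_def[symmetric] using lo hi by (rule antisym[rotated])
qed

end
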